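(* Let $f(x)\in\mathbb C[x]$ be nonzero with $f(0)\ne0$. Then $f(x^m)$ divides $f(x^n)$ in $\mathbb C[x]$ whenever $m\mid n$ if and only if $f(x)$ is a nonzero constant multiple of $\operatorname{lcm}_{m\ge1}(x^m-1)^{h_m}$ (lcm in $\mathbb C[x]$) for some integers $h_m\ge0$, only finitely many of which are nonzero. *)

theory Defs
  imports "HOL-Computational_Algebra.Polynomial_Factorial" "HOL-Computational_Algebra.Field_as_Ring" Complex_Main
begin

definition subst_pow :: "'a::comm_semiring_1 poly \<Rightarrow> nat \<Rightarrow> 'a poly" where
  "subst_pow f m = pcompose f (monom 1 m)"

end

theory Submission
  imports Defs "HOL-Computational_Algebra.Fundamental_Theorem_Algebra" "HOL-Analysis.Complex_Transcendental" "HOL-Number_Theory.Cong"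
begin

lemma order_pow: "p \<noteq> 0 \<Longrightarrow> order a (p ^ n) = n * order a p"
  by (induction n) (auto simp: order_mult)

lemma dvd_by_order:
  fixes p :: "complex poly"
  assumes "p \<noteq> 0" "q \<noteq> 0" "\<And>a. order a p \<le> order a q"
  shows "p dvd q"
proof -
  have "\<forall>q. p \<noteq> 0 \<longrightarrow> q \<noteq> 0 \<longrightarrow> (\<forall>a. order a p \<le> order a q) \<longrightarrow> p dvd q"
  proof (induction p rule: poly_root_order_induct)
    case 0
    then show ?case by simp
  next
    case (no_roots p)
    show ?case
    proof (intro allI impI)
      fix q assume "p \<noteq> 0"
      have "constant (poly p)"
        using no_roots fundamental_theorem_of_algebra by blast
      then have "degree p = 0" using constant_degree by blast
      then obtain c where "p = [:c:]" by (metis degree_eq_zeroE)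
      with \<open>p \<noteq> 0\<close> have "c \<noteq> 0" by auto
      then show "p dvd q" using \<open>p = [:c:]\<close>
        by (simp add: const_poly_dvd_iff dvd_field_iff)
    qed
  next
    case (root p x n)
    show ?case
    proof (intro allI impI)
      fix q assume nz: "[:- x, 1:] ^ n * p \<noteq> 0" "q \<noteq> 0"
        and le: "\<forall>a. order a ([:- x, 1:] ^ n * p) \<le> order a q"
      have p0: "p \<noteq> 0" using nz by auto
      have l0: "[:- x, 1:] ^ n \<noteq> 0" by simp
      have "n \<le> order x q"
        using le[rule_format, of x] nz order_power_n_n[of x n] by (simp add: order_mult)
      then have "[:- x, 1:] ^ n dvd q" using order_divides by blast
      then obtain q' where q': "q = [:- x, 1:] ^ n * q'" by (elim dvdE)
      have q'0: "q' \<noteq> 0" using q' nz by auto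
      have "\<forall>a. order a p \<le> order a q'"
      proof
        fix a
        have "order a ([:- x, 1:] ^ n) + order a p \<le> order a ([:- x, 1:] ^ n) + order a q'"
          using le[rule_format, of a] nz q' q'0 l0 by (simp add: order_mult)
        then show "order a p \<le> order a q'" by simp
      qed
      then have "p dvd q'" using root.IH p0 q'0 by blast
      then show "[:- x, 1:] ^ n * p dvd q" using q' by simp
    qed
  qed
  then show ?thesis using assms by blast
qed

lemma subst_pow_mult: "subst_pow (p * q) m = subst_pow p m * subst_pow q m"
  by (simp add: subst_pow_def pcompose_mult)

lemma subst_pow_power: "subst_pow (p ^ n) m = subst_pow p m ^ n"
  by (induction n) (simp_all add: subst_pow_def pcompose_1 pcompose_mult)

lemma poly_subst_pow: "poly (subst_pow p m) x = poly p (x ^ m)"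
  by (simp add: subst_pow_def poly_pcompose poly_monom)

lemma subst_pow_nz: "(p::complex poly) \<noteq> 0 \<Longrightarrow> 0 < m \<Longrightarrow> subst_pow p m \<noteq> 0"
  by (simp add: subst_pow_def pcompose_eq_0_iff degree_monom_eq)

lemma order_lin: "order b [:- x, 1:] = (if b = x then 1 else (0::nat))"
  using order_power_n_n[of x 1] by (auto intro!: order_0I)

lemma order_subst_lin:
  fixes b x :: complex
  assumes "b \<noteq> 0" "0 < m"
  shows "order b (subst_pow [:- x, 1:] m) = (if b ^ m = x then 1 else 0)"
proof (cases "b ^ m = x")
  case False
  then show ?thesis by (auto intro!: order_0I simp: poly_subst_pow)
next
  case True
  let ?g = "subst_pow [:- x, 1:] m"
  have g0: "?g \<noteq> 0" using subst_pow_nz assms by simp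
  have r: "poly ?g b = 0" using True by (simp add: poly_subst_pow)
  have "pderiv ?g = monom (of_nat m) (m - 1)"
    by (simp add: subst_pow_def pderiv_pcompose pderiv_monom pderiv_pCons)
  then have "poly (pderiv ?g) b \<noteq> 0" using assms by (simp add: poly_monom)
  then have "order b (pderiv ?g) = 0" by (rule order_0I)
  then show ?thesis using order_pderiv[OF g0 r] True by simp
qed

lemma order_subst_pow:
  fixes f :: "complex poly"
  assumes "b \<noteq> 0" "0 < m" "f \<noteq> 0"
  shows "order b (subst_pow f m) = order (b ^ m) f"
proof -
  have "f \<noteq> 0 \<longrightarrow> order b (subst_pow f m) = order (b ^ m) f"
  proof (induction f rule: poly_root_order_induct)
    case 0
    then show ?case by simp
  next
    case (no_roots p)
    have "order b (subst_pow p m) = 0" by (rule order_0I) (simp add: poly_subst_pow no_roots)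
    moreover have "order (b ^ m) p = 0" by (rule order_0I) (simp add: no_roots)
    ultimately show ?case by simp
  next
    case (root p x n)
    show ?case
    proof
      assume nz: "[:- x, 1:] ^ n * p \<noteq> 0"
      then have p0: "p \<noteq> 0" by auto
      have s0: "subst_pow [:- x, 1:] m \<noteq> 0" "subst_pow p m \<noteq> 0"
        using subst_pow_nz[of "[:-x,1:]" m] subst_pow_nz[of p m] assms p0 by auto
      have "order b (subst_pow ([:- x, 1:] ^ n * p) m)
          = n * order b (subst_pow [:- x, 1:] m) + order b (subst_pow p m)"
        using s0 by (simp add: subst_pow_mult subst_pow_power order_mult order_pow)
      also have "\<dots> = n * order (b ^ m) [:- x, 1:] + order (b ^ m) p"
        using root.IH p0 by (simp add: order_subst_lin[OF assms(1,2)] order_lin)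
      also have "\<dots> = order (b ^ m) ([:- x, 1:] ^ n * p)"
        using p0 by (simp add: order_mult order_pow)
      finally show "order b (subst_pow ([:- x, 1:] ^ n * p) m) = order (b ^ m) ([:- x, 1:] ^ n * p)" .
    qed
  qed
  then show ?thesis using assms by blast
qed

lemma order_normalize: "order a (normalize (p::complex poly)) = order a p"
proof (cases "p = 0")
  case False
  then show ?thesis
    by (meson antisym dvd_imp_order_le dvd_normalize_iff normalize_dvd_iff normalize_eq_0_iff dvd_refl)
qed simp

lemma order_lcm:
  fixes p q :: "complex poly"
  assumes "p \<noteq> 0" "q \<noteq> 0"
  shows "order a (lcm p q) = max (order a p) (order a q)"
proof -
  have l0: "lcm p q \<noteq> 0" "gcd p q \<noteq> 0" using assms by (auto simp: lcm_eq_0_iff)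
  have "gcd p q * lcm p q = normalize (p * q)" by (simp add: normalize_mult)
  then have e: "order a (gcd p q) + order a (lcm p q) = order a p + order a q"
    using l0 assms by (metis order_mult mult_eq_0_iff normalize_eq_0_iff order_normalize)
  have g1: "order a (gcd p q) \<le> min (order a p) (order a q)"
    using dvd_imp_order_le assms by (metis gcd_dvd1 gcd_dvd2 min.bounded_iff)
  have "[:-a,1:] ^ min (order a p) (order a q) dvd gcd p q"
    by (rule gcd_greatest) (meson dvd_trans le_imp_power_dvd min.cobounded1 min.cobounded2 order_1)+
  then have g2: "min (order a p) (order a q) \<le> order a (gcd p q)"
    using l0 order_divides by blast
  show ?thesis using e g1 g2 by linarith
qed

lemma order_Lcm:
  fixes A :: "complex poly set"
  assumes "finite A" "0 \<notin> A"
  shows "order a (Lcm A) = Max (insert 0 ((\<lambda>p. order a p) ` A))"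
  using assms
proof (induction A rule: finite_induct)
  case empty
  then show ?case by simp
next
  case (insert x F)
  have "Lcm F \<noteq> 0" using insert Lcm_0_iff by auto
  moreover have "x \<noteq> 0" using insert by auto
  ultimately have "order a (Lcm (insert x F)) = max (order a x) (Max (insert 0 ((\<lambda>p. order a p) ` F)))"
    using insert by (simp add: order_lcm)
  also have "\<dots> = Max (insert (order a x) (insert 0 ((\<lambda>p. order a p) ` F)))"
    using insert by (subst Max_insert) auto
  also have "insert (order a x) (insert 0 ((\<lambda>p. order a p) ` F)) = insert 0 ((\<lambda>p. order a p) ` insert x F)"
    by auto
  finally show ?case .
qed

definition zr :: "nat \<Rightarrow> nat \<Rightarrow> complex" where
  "zr j m = exp(2 * of_real pi * \<i> * of_nat j / of_nat m)"

lemma zr_pow: "zr j m ^ k = zr (j * k) m"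
proof -
  have "zr j m ^ k = exp (of_nat k * (2 * of_real pi * \<i> * of_nat j / of_nat m))"
    unfolding zr_def by (rule exp_of_nat_mult[symmetric])
  also have "\<dots> = zr (j * k) m" unfolding zr_def by (simp add: field_simps)
  finally show ?thesis .
qed

lemma zr_one_iff: "0 < m \<Longrightarrow> zr j m = 1 \<longleftrightarrow> m dvd j"
  unfolding zr_def by (rule complex_root_unity_eq_1) simp

lemma zr_eq_iff: "0 < m \<Longrightarrow> zr j m = zr k m \<longleftrightarrow> j mod m = k mod m"
  unfolding zr_def by (rule complex_root_unity_eq) simp

lemma zr_pow_m: "0 < m \<Longrightarrow> zr j m ^ m = 1"
  unfolding zr_def by (rule complex_root_unity) simp

lemma zr_cancel: "0 < g \<Longrightarrow> zr (j * g) (d * g) = zr j d"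
  unfolding zr_def by (simp add: field_simps)

lemma zr_exists: "0 < N \<Longrightarrow> a ^ N = 1 \<Longrightarrow> \<exists>j<N. a = zr j N"
  using complex_roots_unity[of N] unfolding zr_def by auto

lemma zr_inj: "0 < m \<Longrightarrow> 0 < n \<Longrightarrow> zr 1 m = zr 1 n \<Longrightarrow> m = n"
proof -
  assume m: "0 < m" and n: "0 < n" and e: "zr 1 m = zr 1 n"
  have "zr 1 m ^ n = 1" by (metis e zr_pow_m[OF n])
  then have "m dvd n" using zr_pow zr_one_iff[OF m] by simp
  moreover have "zr 1 n ^ m = 1" by (metis e zr_pow_m[OF m])
  then have "n dvd m" using zr_pow zr_one_iff[OF n] by simp
  ultimately show "m = n" by (simp add: dvd_antisym)
qed

lemma root_unity_primitive:
  assumes "0 < N" "a ^ N = (1::complex)"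
  shows "\<exists>d k. 0 < d \<and> 0 < k \<and> a ^ d = 1 \<and> a ^ k = zr 1 d"
proof -
  obtain j where j: "j < N" "a = zr j N" using zr_exists assms by blast
  define g where "g = gcd j N"
  have g0: "0 < g" using assms g_def by simp
  define d where "d = N div g"
  define j' where "j' = j div g"
  have N: "N = d * g" unfolding d_def g_def by simp
  have J: "j = j' * g" unfolding j'_def g_def by simp
  have d0: "0 < d" using N assms by (metis gr0I mult_0)
  have a: "a = zr j' d" using j J N zr_cancel[OF g0] by simp
  have cp: "coprime j' d"
    unfolding j'_def d_def g_def using assms
    by (metis div_gcd_coprime gcd_eq_0_iff not_gr0)
  obtain x where x: "[j' * x = Suc 0] (mod d)" using cong_solve_coprime_nat[OF cp] by blast
  have "a ^ (x + d) = zr (j' * (x + d)) d" using a zr_pow by simp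
  also have "\<dots> = zr 1 d"
  proof -
    have "(j' * (x + d)) mod d = 1 mod d"
      using x unfolding cong_def by (simp add: algebra_simps)
    then show ?thesis using zr_eq_iff[OF d0] by blast
  qed
  finally have "a ^ (x + d) = zr 1 d" .
  moreover have "a ^ d = 1" using a zr_pow_m[OF d0] by simp
  ultimately show ?thesis using d0 by (intro exI[of _ d] exI[of _ "x + d"]) auto
qed

lemma P_eq: "(monom 1 m - 1 :: complex poly) = subst_pow [:-1,1:] m"
proof -
  have "(-1 :: complex poly) = [:-1:]"
    by (metis one_pCons minus_pCons neg_equal_0_iff_equal minus_zero)
  then show ?thesis by (simp add: subst_pow_def pcompose_pCons)
qed

lemma order_P_pow:
  assumes "0 < m"
  shows "order a ((monom 1 m - 1 :: complex poly) ^ k) = (if a ^ m = 1 then k else 0)"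
proof (cases "a = 0")
  case True
  have "poly ((monom 1 m - 1 :: complex poly) ^ k) a \<noteq> 0" using True assms by (simp add: poly_monom power_0_left)
  moreover have "a ^ m \<noteq> 1" using True assms by (simp add: power_0_left)
  ultimately show ?thesis using True by (simp add: order_0I)
next
  case False
  have nz: "(monom 1 m - 1 :: complex poly) \<noteq> 0" using P_eq subst_pow_nz assms by simp
  show ?thesis using order_subst_lin[OF False assms, of 1] nz
    by (simp add: order_pow P_eq)
qed

lemma P_nz:
  assumes "0 < m" shows "(monom 1 m - 1 :: complex poly) ^ k \<noteq> 0"
proof -
  have "[:-1,1::complex:] \<noteq> 0" by simp
  then have "subst_pow [:-1,1::complex:] m \<noteq> 0" by (rule subst_pow_nz[OF _ assms])
  then have "(monom 1 m - 1 :: complex poly) \<noteq> 0" unfolding P_eq .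
  then show ?thesis by (rule power_not_zero)
qed

lemma T_nz: "0 \<notin> (\<lambda>m. (monom 1 m - 1 :: complex poly) ^ h m) ` {m. 0 < m}"
proof
  assume "0 \<in> (\<lambda>m. (monom 1 m - 1 :: complex poly) ^ h m) ` {m. 0 < m}"
  then obtain m where m: "m \<in> {m. 0 < m}" "0 = (monom 1 m - 1 :: complex poly) ^ h m" by (rule imageE)
  then have "0 < m" by simp
  then have "(monom 1 m - 1 :: complex poly) ^ h m \<noteq> 0" by (rule P_nz)
  then show False using m(2) by simp
qed

lemma T_finite:
  assumes "finite {m. 0 < m \<and> h m \<noteq> 0}"
  shows "finite ((\<lambda>m. (monom 1 m - 1 :: complex poly) ^ h m) ` {m. 0 < m})"
proof (rule finite_subset)
  show "(\<lambda>m. (monom 1 m - 1 :: complex poly) ^ h m) ` {m. 0 < m}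
     \<subseteq> insert 1 ((\<lambda>m. (monom 1 m - 1 :: complex poly) ^ h m) ` {m. 0 < m \<and> h m \<noteq> 0})"
  proof
    fix x assume "x \<in> (\<lambda>m. (monom 1 m - 1 :: complex poly) ^ h m) ` {m. 0 < m}"
    then obtain m where m: "0 < m" "x = (monom 1 m - 1 :: complex poly) ^ h m" by blast
    show "x \<in> insert 1 ((\<lambda>m. (monom 1 m - 1 :: complex poly) ^ h m) ` {m. 0 < m \<and> h m \<noteq> 0})"
    proof (cases "h m = 0")
      case True
      then have "x = 1" using m by simp
      then show ?thesis by blast
    next
      case False
      then show ?thesis using m by blast
    qed
  qed
  show "finite (insert 1 ((\<lambda>m. (monom 1 m - 1 :: complex poly) ^ h m) ` {m. 0 < m \<and> h m \<noteq> 0}))"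
    by (intro finite.insertI finite_imageI assms)
qed

lemma order_L:
  assumes "finite {m. 0 < m \<and> h m \<noteq> 0}"
  shows "order a (Lcm ((\<lambda>m. (monom 1 m - 1 :: complex poly) ^ h m) ` {m. 0 < m}))
       = Max (insert 0 ((\<lambda>m. if a ^ m = 1 then h m else 0) ` {m. 0 < m}))"
proof -
  let ?T = "(\<lambda>m. (monom 1 m - 1 :: complex poly) ^ h m) ` {m. 0 < m}"
  have "order a (Lcm ?T) = Max (insert 0 ((\<lambda>p. order a p) ` ?T))"
    by (rule order_Lcm[OF T_finite[OF assms] T_nz])
  also have "(\<lambda>p. order a p) ` ?T = (\<lambda>m. if a ^ m = 1 then h m else 0) ` {m. 0 < m}"
    unfolding image_image by (intro image_cong refl) (simp add: order_P_pow)
  finally show ?thesis .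
qed

lemma L_nz:
  assumes "finite {m. 0 < m \<and> h m \<noteq> 0}"
  shows "Lcm ((\<lambda>m. (monom 1 m - 1 :: complex poly) ^ h m) ` {m. 0 < m}) \<noteq> 0"
  using Lcm_0_iff[OF T_finite[OF assms]] T_nz by blast

lemma finite_vals:
  assumes "finite {m. 0 < m \<and> h m \<noteq> 0}"
  shows "finite (insert 0 ((\<lambda>m. if (a::complex) ^ m = 1 then h m else 0) ` {m. 0 < m}))"
proof -
  have "(\<lambda>m. if a ^ m = 1 then h m else 0) ` {m. 0 < m} \<subseteq> insert 0 (h ` {m. 0 < m \<and> h m \<noteq> 0})"
    by auto
  then show ?thesis by (intro finite.insertI finite_subset[OF _ finite.insertI[OF finite_imageI[OF assms]]])
qed

theorem proposition1:
  fixes f :: "complex poly"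
  assumes "f \<noteq> 0" and "poly f 0 \<noteq> 0"
  shows "(\<forall>m n :: nat. 0 < m \<longrightarrow> 0 < n \<longrightarrow> m dvd n \<longrightarrow> subst_pow f m dvd subst_pow f n)
     \<longleftrightarrow> (\<exists>(c::complex) (h::nat \<Rightarrow> nat). c \<noteq> 0 \<and> finite {m. 0 < m \<and> h m \<noteq> 0} \<and>
            f = smult c (Lcm ((\<lambda>m. (monom 1 m - 1 :: complex poly) ^ h m) ` {m. 0 < m})))"
    (is "?A \<longleftrightarrow> ?B")
proof
  assume A: ?A
  have M: "order a f \<le> order (a ^ k) f" if "0 < k" for a k
  proof (cases "a = 0")
    case True
    have "order 0 f = 0" by (rule order_0I) (rule assms(2))
    then show ?thesis using True by simp
  next
    case False
    have "order a f = order a (subst_pow f 1)" using order_subst_pow[OF False _ assms(1), of 1] by simp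
    also have "\<dots> \<le> order a (subst_pow f k)"
      using A that subst_pow_nz[OF assms(1) that] by (intro dvd_imp_order_le) auto
    also have "\<dots> = order (a ^ k) f" using order_subst_pow[OF False that assms(1)] .
    finally show ?thesis .
  qed
  define h where "h m = order (zr 1 m) f" for m
  have fin: "finite {m. 0 < m \<and> h m \<noteq> 0}"
  proof (rule inj_on_finite[of "\<lambda>m. zr 1 m" _ "{x. poly f x = 0}"])
    show "inj_on (\<lambda>m. zr 1 m) {m. 0 < m \<and> h m \<noteq> 0}" using zr_inj by (auto simp: inj_on_def)
    show "(\<lambda>m. zr 1 m) ` {m. 0 < m \<and> h m \<noteq> 0} \<subseteq> {x. poly f x = 0}"
      using assms(1) by (auto simp: h_def order_root)
    show "finite {x. poly f x = 0}" using poly_roots_finite assms(1) by blast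
  qed
  let ?L = "Lcm ((\<lambda>m. (monom 1 m - 1 :: complex poly) ^ h m) ` {m. 0 < m})"
  have L0: "?L \<noteq> 0" using L_nz[OF fin] .
  have eq: "order a f = order a ?L" for a
  proof -
    let ?V = "insert 0 ((\<lambda>m. if a ^ m = 1 then h m else 0) ` {m. 0 < m})"
    have fv: "finite ?V" using finite_vals[OF fin] .
    have "Max ?V \<le> order a f"
    proof (rule Max.boundedI[OF fv])
      fix v assume "v \<in> ?V"
      then consider "v = 0" | m where "0 < m" "a ^ m = 1" "v = h m" | m where "v = 0"
        by (auto split: if_splits)
      then show "v \<le> order a f"
      proof cases
        case (2 m)
        obtain j where j: "a = zr j m" using zr_exists 2 by blast
        have "zr 1 m ^ (j + m) = a" using j zr_pow[of 1 m j] zr_pow_m[OF \<open>0 < m\<close>]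
          by (simp add: power_add)
        then show ?thesis using M[of "j + m" "zr 1 m"] 2 by (simp add: h_def)
      qed auto
    qed auto
    moreover have "order a f \<le> Max ?V"
    proof (cases "order a f = 0")
      case False
      then have root: "poly f (a ^ k) = 0" if "0 < k" for k
        using M[OF that, of a] assms(1) by (simp add: order_root)
      have a0: "a \<noteq> 0" using root[of 1] assms(2) by auto
      have "\<not> inj (\<lambda>k. a ^ Suc k)"
      proof
        assume "inj (\<lambda>k. a ^ Suc k)"
        moreover have "range (\<lambda>k. a ^ Suc k) \<subseteq> {x. poly f x = 0}" by (auto simp del: power_Suc intro!: root)
        ultimately have "finite (UNIV :: nat set)"
          using inj_on_finite poly_roots_finite[OF assms(1)] by blast
        then show False by simp
      qed
      then obtain i j where ij: "i \<noteq> j" "a ^ Suc i = a ^ Suc j" unfolding inj_def by blast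
      have key: "\<exists>N>0. a ^ N = 1" if "i < j" "a ^ Suc i = a ^ Suc j" for i j
      proof -
        have e: "Suc i + (j - i) = Suc j" using that(1) by simp
        have "a ^ Suc i * a ^ (j - i) = a ^ Suc j" unfolding power_add[symmetric] e ..
        then have "a ^ Suc i * a ^ (j - i) = a ^ Suc i * 1" using that(2) by (metis mult_1_right)
        then have "a ^ (j - i) = 1" using a0 by (metis mult_left_cancel power_not_zero)
        then show ?thesis using that(1) by (intro exI[of _ "j - i"]) auto
      qed
      have "\<exists>N>0. a ^ N = 1"
      proof (cases "i < j")
        case True
        then show ?thesis using key ij by blast
      next
        case False
        then have "j < i" using ij by simp
        then show ?thesis using key[OF \<open>j < i\<close> ij(2)[symmetric]] by blast
      qed
      then obtain N where "0 < N" "a ^ N = 1" by blast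
      then obtain d k where dk: "0 < d" "0 < k" "a ^ d = 1" "a ^ k = zr 1 d"
        using root_unity_primitive by blast
      have "order a f \<le> h d" using M[OF dk(2), of a] dk(4) by (simp add: h_def)
      also have "h d \<le> Max ?V" using dk fv by (intro Max_ge) auto
      finally show ?thesis .
    qed simp
    ultimately show ?thesis using order_L[OF fin, of a] by simp
  qed
  have d1: "f dvd ?L" by (rule dvd_by_order[OF assms(1) L0]) (simp add: eq)
  have d2: "?L dvd f" by (rule dvd_by_order[OF L0 assms(1)]) (simp add: eq)
  obtain u where u: "?L = f * u" using d1 by (elim dvdE)
  obtain v where v: "f = ?L * v" using d2 by (elim dvdE)
  have "f * (u * v) = f * 1" using u v by (simp add: mult.assoc[symmetric])
  then have "u * v = 1" using assms(1) by simp
  then have "v dvd 1" by (metis dvd_triv_right)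
  then obtain c where c: "v = [:c:]" "c dvd 1" by (auto simp: is_unit_poly_iff)
  have "c \<noteq> 0" using c by auto
  moreover have "f = smult c ?L" using v c by simp
  ultimately show ?B using fin by blast
next
  assume ?B
  then obtain c h where c: "c \<noteq> 0" and fin: "finite {m. 0 < m \<and> h m \<noteq> 0}"
    and f: "f = smult c (Lcm ((\<lambda>m. (monom 1 m - 1 :: complex poly) ^ h m) ` {m. 0 < m}))"
    by blast
  have ordf: "order a f = Max (insert 0 ((\<lambda>m. if a ^ m = 1 then h m else 0) ` {m. 0 < m}))" for a
    by (simp only: f order_smult[OF c] order_L[OF fin])
  have M: "order a f \<le> order (a ^ k) f" for a k
  proof -
    have fv: "finite (insert 0 ((\<lambda>m. if (a ^ k) ^ m = 1 then h m else 0) ` {m. 0 < m}))"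
      using finite_vals[OF fin] .
    show ?thesis unfolding ordf
    proof (rule Max.boundedI[OF finite_vals[OF fin]])
      fix v assume "v \<in> insert 0 ((\<lambda>m. if a ^ m = 1 then h m else 0) ` {m. 0 < m})"
      then consider "v = 0" | m where "0 < m" "a ^ m = 1" "v = h m" | m where "v = 0"
        by (auto split: if_splits)
      then show "v \<le> Max (insert 0 ((\<lambda>m. if (a ^ k) ^ m = 1 then h m else 0) ` {m. 0 < m}))"
      proof cases
        case (2 m)
        have "(a ^ k) ^ m = (a ^ m) ^ k" by (simp add: power_mult[symmetric] mult.commute)
        then have km: "(a ^ k) ^ m = 1" using 2 by simp
        have "h m \<in> (\<lambda>m. if (a ^ k) ^ m = 1 then h m else 0) ` {m. 0 < m}"
          using km 2 by (intro image_eqI[of _ _ m]) auto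
        then show ?thesis using 2 fv by (intro Max_ge) auto
      qed auto
    qed auto
  qed
  show ?A
  proof (intro allI impI)
    fix m n :: nat assume m: "0 < m" and n: "0 < n" and "m dvd n"
    then obtain k where k: "n = m * k" by (elim dvdE)
    show "subst_pow f m dvd subst_pow f n"
    proof (rule dvd_by_order[OF subst_pow_nz[OF assms(1) m] subst_pow_nz[OF assms(1) n]])
      fix b
      show "order b (subst_pow f m) \<le> order b (subst_pow f n)"
      proof (cases "b = 0")
        case True
        have "order b (subst_pow f m) = 0" using True assms(2) m
          by (intro order_0I) (simp add: poly_subst_pow power_0_left)
        then show ?thesis by simp
      next
        case False
        have e1: "order b (subst_pow f n) = order (b ^ n) f" by (rule order_subst_pow[OF False n assms(1)])
        have e2: "order b (subst_pow f m) = order (b ^ m) f" by (rule order_subst_pow[OF False m assms(1)])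
        have e3: "b ^ n = (b ^ m) ^ k" by (simp add: k power_mult)
        show ?thesis unfolding e1 e2 e3 by (rule M)
      qed
    qed
  qed
qed

end
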